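(* Let $n\geq 1$ be an integer and let $a,b,x\in\mathbb{C}$ with $b\neq 0$. Then $$\sum_{k=0}^{n-1}\binom{n-1}{k}C_{k+1}^{(a,b)}x^{k}(x-a)^{n-1-k}(x-b)^{n-1-k}=\sum_{k=0}^{n-1}\frac{1}{n}\binom{n}{k}\binom{n}{k+1}x^{2k}a^{n-k}b^{n-1-k}=\frac{1}{b}\sum_{k=0}^{n}\binom{n+k}{2k}C_k x^{2k}(ab-x^2)^{n-k},$$ where $C_k$ is the $k$-th Catalan number and $C_m^{(a,b)}$ is the valley type $(a,b)$-Catalan number defined in the context.
   Context: $C_k=\frac{1}{k+1}\binom{2k}{k}$ are the Catalan numbers. For $m\geq 1$ and $a,b\in\mathbb{C}$, the valley type $(a,b)$-Catalan number is $C_m^{(a,b)}=\sum_{k=0}^{m-1}\frac{1}{m}\binom{m}{k}\binom{m}{k+1}a^{m-k}b^k$. *)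

theory Defs
  imports Complex_Main
begin

definition catalan :: "nat \<Rightarrow> complex" where
  "catalan k = (1 / of_nat (k + 1)) * of_nat ((2 * k) choose k)"

text \<open>Valley type (a,b)-Catalan number, for m >= 1.\<close>
definition valley_catalan :: "complex \<Rightarrow> complex \<Rightarrow> nat \<Rightarrow> complex" where
  "valley_catalan a b m =
     (\<Sum>k = 0..m - 1. (1 / of_nat m) * of_nat (m choose k) * of_nat (m choose (k + 1))
                        * a ^ (m - k) * b ^ k)"

end

theory Submission
  imports Defs
begin

lemma swap_tri:
  fixes g :: "nat \<Rightarrow> nat \<Rightarrow> 'a::comm_monoid_add"
  shows "(\<Sum>j\<le>n. \<Sum>k\<in>{j..n}. g j k) = (\<Sum>k\<le>n. \<Sum>j\<le>k. g j k)"
proof -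
  have "(\<Sum>j\<le>n. \<Sum>k\<in>{j..n}. g j k) = (\<Sum>j\<le>n. \<Sum>k\<in>{k\<in>{..n}. j \<le> k}. g j k)"
    by (intro sum.cong refl) (auto intro!: sum.cong)
  also have "\<dots> = (\<Sum>k\<le>n. \<Sum>j\<in>{j\<in>{..n}. j \<le> k}. g j k)"
    by (rule sum.swap_restrict) auto
  also have "\<dots> = (\<Sum>k\<le>n. \<Sum>j\<le>k. g j k)"
    by (intro sum.cong refl) (auto intro!: sum.cong)
  finally show ?thesis .
qed

lemma shift_sum:
  fixes h :: "nat \<Rightarrow> 'a::comm_monoid_add"
  assumes "i \<le> n"
  shows "(\<Sum>l\<le>n - i. h l) = (\<Sum>k\<in>{i..n}. h (k - i))"
proof -
  have "(\<Sum>k\<in>{i..n}. h (k - i)) = (\<Sum>l\<in>{0..n-i}. h l)"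
    using assms by (intro sum.reindex_bij_witness[where i="\<lambda>l. l + i" and j="\<lambda>k. k - i"]) auto
  thus ?thesis by (simp add: atLeast0AtMost)
qed

lemma lemA:
  fixes f :: "nat \<Rightarrow> complex"
  shows "(\<Sum>j\<le>n. f j * y^j * (y+w)^(n-j)) =
         (\<Sum>k\<le>n. (\<Sum>j\<le>k. f j * of_nat ((n-j) choose (k-j))) * y^k * w^(n-k))"
proof -
  have "(\<Sum>j\<le>n. f j * y^j * (y+w)^(n-j)) =
        (\<Sum>j\<le>n. \<Sum>k\<in>{j..n}. f j * of_nat ((n-j) choose (k-j)) * y^k * w^(n-k))"
  proof (intro sum.cong refl)
    fix j assume j: "j \<in> {..n}"
    have "f j * y^j * (y+w)^(n-j) = (\<Sum>l\<le>n-j. f j * y^j * (of_nat ((n-j) choose l) * y^l * w^(n-j-l)))"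
      by (simp add: binomial_ring sum_distrib_left)
    also have "\<dots> = (\<Sum>k\<in>{j..n}. f j * y^j * (of_nat ((n-j) choose (k-j)) * y^(k-j) * w^(n-j-(k-j))))"
      using j by (intro shift_sum) auto
    also have "\<dots> = (\<Sum>k\<in>{j..n}. f j * of_nat ((n-j) choose (k-j)) * y^k * w^(n-k))"
    proof (intro sum.cong refl)
      fix k assume k: "k \<in> {j..n}"
      have "y^j * y^(k-j) = y^k" using k by (simp add: power_add[symmetric])
      moreover have "n-j-(k-j) = n-k" using k by auto
      ultimately show "f j * y^j * (of_nat ((n-j) choose (k-j)) * y^(k-j) * w^(n-j-(k-j))) = f j * of_nat ((n-j) choose (k-j)) * y^k * w^(n-k)"
        by (metis (no_types, lifting) mult.commute mult.left_commute)
    qed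
    finally show "f j * y^j * (y+w)^(n-j) = (\<Sum>k\<in>{j..n}. f j * of_nat ((n-j) choose (k-j)) * y^k * w^(n-k))" .
  qed
  also have "\<dots> = (\<Sum>k\<le>n. \<Sum>j\<le>k. f j * of_nat ((n-j) choose (k-j)) * y^k * w^(n-k))"
    by (rule swap_tri)
  also have "\<dots> = (\<Sum>k\<le>n. (\<Sum>j\<le>k. f j * of_nat ((n-j) choose (k-j))) * y^k * w^(n-k))"
    by (simp add: sum_distrib_right)
  finally show ?thesis .
qed

lemma lemB:
  fixes c :: "nat \<Rightarrow> complex"
  assumes c0: "\<And>i. r < 2*i \<Longrightarrow> c i = 0"
  shows "(\<Sum>i\<le>r. c i * (Y*S)^i * (Y+S)^(r-2*i)) =
         (\<Sum>j\<le>r. (\<Sum>i\<le>j. c i * of_nat ((r-2*i) choose (j-i))) * Y^j * S^(r-j))"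
proof -
  have "(\<Sum>i\<le>r. c i * (Y*S)^i * (Y+S)^(r-2*i)) =
        (\<Sum>i\<le>r. \<Sum>j\<in>{i..r}. c i * of_nat ((r-2*i) choose (j-i)) * Y^j * S^(r-j))"
  proof (intro sum.cong refl)
    fix i assume i: "i \<in> {..r}"
    show "c i * (Y*S)^i * (Y+S)^(r-2*i) = (\<Sum>j\<in>{i..r}. c i * of_nat ((r-2*i) choose (j-i)) * Y^j * S^(r-j))"
    proof (cases "2*i \<le> r")
      case False
      then show ?thesis using c0[of i] by simp
    next
      case True
      have "c i * (Y*S)^i * (Y+S)^(r-2*i) = (\<Sum>l\<le>r-2*i. c i * (Y*S)^i * (of_nat ((r-2*i) choose l) * Y^l * S^(r-2*i-l)))"
        by (simp add: binomial_ring sum_distrib_left)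
      also have "\<dots> = (\<Sum>j\<in>{i..r-i}. c i * (Y*S)^i * (of_nat ((r-2*i) choose (j-i)) * Y^(j-i) * S^(r-2*i-(j-i))))"
      proof -
        have e: "r - 2*i = (r-i) - i" by auto
        show ?thesis unfolding e by (rule shift_sum) (use True in auto)
      qed
      also have "\<dots> = (\<Sum>j\<in>{i..r-i}. c i * of_nat ((r-2*i) choose (j-i)) * Y^j * S^(r-j))"
      proof (intro sum.cong refl)
        fix j assume j: "j \<in> {i..r-i}"
        have e1: "Y^i * Y^(j-i) = Y^j" using j by (simp add: power_add[symmetric])
        have e2: "S^i * S^(r-2*i-(j-i)) = S^(r-j)"
        proof -
          have "i + (r-2*i-(j-i)) = r - j" using j True by auto
          thus ?thesis by (metis power_add)
        qed
        have "c i * (Y*S)^i * (of_nat ((r-2*i) choose (j-i)) * Y^(j-i) * S^(r-2*i-(j-i))) = c i * of_nat ((r-2*i) choose (j-i)) * (Y^i * Y^(j-i)) * (S^i * S^(r-2*i-(j-i)))"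
          by (simp add: power_mult_distrib mult_ac)
        then show "c i * (Y*S)^i * (of_nat ((r-2*i) choose (j-i)) * Y^(j-i) * S^(r-2*i-(j-i))) = c i * of_nat ((r-2*i) choose (j-i)) * Y^j * S^(r-j)"
          unfolding e1 e2 .
      qed
      also have "\<dots> = (\<Sum>j\<in>{i..r}. c i * of_nat ((r-2*i) choose (j-i)) * Y^j * S^(r-j))"
        by (rule sum.mono_neutral_left) (use True in \<open>auto simp: binomial_eq_0_iff\<close>)
      finally show ?thesis .
    qed
  qed
  also have "\<dots> = (\<Sum>j\<le>r. \<Sum>i\<le>j. c i * of_nat ((r-2*i) choose (j-i)) * Y^j * S^(r-j))"
    by (rule swap_tri)
  also have "\<dots> = (\<Sum>j\<le>r. (\<Sum>i\<le>j. c i * of_nat ((r-2*i) choose (j-i))) * Y^j * S^(r-j))"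
    by (simp add: sum_distrib_right)
  finally show ?thesis .
qed

lemma vand1: "(\<Sum>i\<le>j. (j choose i) * (m choose (i+1))) = (j+m) choose (j+1)"
proof -
  have "(j+m) choose (j+1) = (\<Sum>k\<le>Suc j. (j choose k) * (m choose (Suc j - k)))"
    using vandermonde[of j m "Suc j"] by simp
  also have "\<dots> = (\<Sum>k\<le>j. (j choose k) * (m choose (Suc j - k)))"
    by (simp add: sum.atMost_Suc)
  also have "\<dots> = (\<Sum>i\<le>j. (j choose (j-i)) * (m choose (Suc j - (j-i))))"
    by (rule sum.reindex_bij_witness[where i="\<lambda>k. j-k" and j="\<lambda>k. j-k"]) auto
  also have "\<dots> = (\<Sum>i\<le>j. (j choose i) * (m choose (i+1)))"
    by (intro sum.cong refl) (auto simp: binomial_symmetric[symmetric] Suc_diff_le)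
  finally show ?thesis by simp
qed


lemma N1:
  assumes "i \<le> j" "j \<le> r"
  shows "(r choose (2*i)) * ((2*i) choose i) * ((r-2*i) choose (j-i)) = (r choose j) * (j choose i) * ((r-j) choose i)"
proof (cases "i \<le> r - j")
  case True
  have a1: "(r choose (2*i)) * ((2*i) choose i) = (r choose i) * ((r-i) choose i)"
    using choose_mult[of i "2*i" r] True assms by auto
  have a2: "(r choose j) * (j choose i) = (r choose i) * ((r-i) choose (j-i))"
    using choose_mult[of i j r] assms by auto
  have b1: "((r-i) choose j) * (j choose i) = ((r-i) choose i) * ((r-2*i) choose (j-i))"
    using choose_mult[of i j "r-i"] True assms by (auto simp: diff_diff_left mult_2)
  have b2: "((r-i) choose j) * (j choose (j-i)) = ((r-i) choose (j-i)) * ((r-j) choose i)"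
    using choose_mult[of "j-i" j "r-i"] True assms by auto
  have b3: "j choose (j-i) = j choose i" using assms by (simp add: binomial_symmetric[symmetric])
  have "(r choose (2*i)) * ((2*i) choose i) * ((r-2*i) choose (j-i)) = (r choose i) * (((r-i) choose i) * ((r-2*i) choose (j-i)))"
    using a1 by simp
  also have "\<dots> = (r choose i) * (((r-i) choose (j-i)) * ((r-j) choose i))"
    using b1 b2 b3 by simp
  also have "\<dots> = (r choose j) * (j choose i) * ((r-j) choose i)"
    using a2 by simp
  finally show ?thesis .
next
  case False
  then have "(r-j) choose i = 0" by simp
  moreover have "(r choose (2*i)) * ((r-2*i) choose (j-i)) = 0"
  proof (cases "2*i \<le> r")
    case True then show ?thesis using False assms by (auto simp: binomial_eq_0_iff)
  next
    case F: False then show ?thesis by (simp add: binomial_eq_0_iff)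
  qed
  ultimately show ?thesis by (metis mult.commute mult_0_right mult.left_commute)
qed

lemma frac_aux:
  fixes A C D E F :: complex
  assumes "F \<noteq> 0" "E \<noteq> 0" "F * D = E * C"
  shows "A * C / F = A * (D / E)"
proof -
  have "D = E * C / F" using assms by (simp add: eq_divide_eq mult.commute)
  thus ?thesis using assms by simp
qed

lemma coefG:
  assumes "j \<le> r"
  shows "(\<Sum>i\<le>j. catalan i * of_nat (r choose (2*i)) * of_nat ((r-2*i) choose (j-i)))
         = 1 / of_nat (r+1) * of_nat ((r+1) choose j) * of_nat ((r+1) choose (j+1))"
proof -
  have "(\<Sum>i\<le>j. catalan i * of_nat (r choose (2*i)) * of_nat ((r-2*i) choose (j-i)))
      = (\<Sum>i\<le>j. of_nat (r choose j) / of_nat (Suc (r-j)) * (of_nat (j choose i) * of_nat (Suc (r-j) choose Suc i)))"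
  proof (intro sum.cong refl)
    fix i assume i: "i \<in> {..j}"
    have n1: "of_nat (r choose (2*i)) * of_nat ((2*i) choose i) * of_nat ((r-2*i) choose (j-i)) = (of_nat (r choose j) * of_nat (j choose i) * of_nat ((r-j) choose i) :: complex)"
      using N1[of i j r] i assms by (metis atMost_iff of_nat_mult)
    have n2: "of_nat (Suc i) * of_nat (Suc (r-j) choose Suc i) = (of_nat (Suc (r-j)) * of_nat ((r-j) choose i) :: complex)"
      using Suc_times_binomial[of i "r-j"] by (metis of_nat_mult)
    have "catalan i * of_nat (r choose (2*i)) * of_nat ((r-2*i) choose (j-i)) =
          (of_nat (r choose (2*i)) * of_nat ((2*i) choose i) * of_nat ((r-2*i) choose (j-i))) / of_nat (Suc i)"
      by (simp add: catalan_def field_simps)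
    also have "\<dots> = of_nat (r choose j) * of_nat (j choose i) * (of_nat ((r-j) choose i)) / of_nat (Suc i)"
      using n1 by simp
    also have "\<dots> = of_nat (r choose j) * of_nat (j choose i) * (of_nat (Suc (r-j) choose Suc i) / of_nat (Suc (r-j)))"
      by (rule frac_aux[OF _ _ n2]) (simp_all del: of_nat_Suc)
    finally show "catalan i * of_nat (r choose (2*i)) * of_nat ((r-2*i) choose (j-i)) = of_nat (r choose j) / of_nat (Suc (r-j)) * (of_nat (j choose i) * of_nat (Suc (r-j) choose Suc i))"
      by simp
  qed
  also have "\<dots> = of_nat (r choose j) / of_nat (Suc (r-j)) * of_nat (\<Sum>i\<le>j. (j choose i) * (Suc (r-j) choose (i+1)))"
    by (simp add: sum_distrib_left)
  also have "\<dots> = of_nat (r choose j) / of_nat (Suc (r-j)) * of_nat ((r+1) choose (j+1))"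
    using vand1[of j "Suc (r-j)"] assms by simp
  also have "\<dots> = 1 / of_nat (r+1) * of_nat ((r+1) choose j) * of_nat ((r+1) choose (j+1))"
  proof -
    have "(r+1-j) * ((r+1) choose j) = (r+1) * (r choose j)"
      using binomial_absorb_comp[of "r+1" j] by simp
    hence "of_nat (Suc (r-j)) * of_nat ((r+1) choose j) = (of_nat (r+1) * of_nat (r choose j) :: complex)"
      using assms by (metis Suc_diff_le Suc_eq_plus1 of_nat_mult)
    thus ?thesis by (simp add: field_simps del: of_nat_Suc)
  qed
  finally show ?thesis .
qed


lemma lemG:
  "(\<Sum>j\<le>r. 1 / of_nat (r+1) * of_nat ((r+1) choose j) * of_nat ((r+1) choose (j+1)) * Y^j * S^(r-j))
   = (\<Sum>i\<le>r. catalan i * of_nat (r choose (2*i)) * (Y*S)^i * (Y+S)^(r-2*i))"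
proof -
  have "(\<Sum>i\<le>r. catalan i * of_nat (r choose (2*i)) * (Y*S)^i * (Y+S)^(r-2*i))
     = (\<Sum>j\<le>r. (\<Sum>i\<le>j. (catalan i * of_nat (r choose (2*i))) * of_nat ((r-2*i) choose (j-i))) * Y^j * S^(r-j))"
    by (rule lemB) simp
  also have "\<dots> = (\<Sum>j\<le>r. 1 / of_nat (r+1) * of_nat ((r+1) choose j) * of_nat ((r+1) choose (j+1)) * Y^j * S^(r-j))"
    by (intro sum.cong refl) (simp add: coefG)
  finally show ?thesis by simp
qed

lemma coefE2:
  assumes "k \<le> n" "1 \<le> n"
  shows "(\<Sum>j\<le>k. 1 / of_nat n * of_nat (n choose j) * of_nat (n choose (j+1)) * of_nat ((n-j) choose (k-j)))
         = of_nat ((n+k) choose (2*k)) * catalan k"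
proof -
  have "(\<Sum>j\<le>k. 1 / of_nat n * of_nat (n choose j) * of_nat (n choose (j+1)) * of_nat ((n-j) choose (k-j)) :: complex)
      = (\<Sum>j\<le>k. 1 / of_nat n * of_nat (n choose k) * of_nat ((k choose j) * (n choose (j+1))))"
  proof (intro sum.cong refl)
    fix j assume j: "j \<in> {..k}"
    have "(n choose k) * (k choose j) = (n choose j) * ((n-j) choose (k-j))"
      using choose_mult[of j k n] j assms by auto
    hence "(of_nat (n choose j) * of_nat ((n-j) choose (k-j)) :: complex) = of_nat (n choose k) * of_nat (k choose j)"
      by (metis of_nat_mult)
    thus "1 / of_nat n * of_nat (n choose j) * of_nat (n choose (j+1)) * of_nat ((n-j) choose (k-j)) = 1 / of_nat n * of_nat (n choose k) * (of_nat ((k choose j) * (n choose (j+1))) :: complex)"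
      apply (simp add: algebra_simps)
      done
  qed
  also have "\<dots> = 1 / of_nat n * of_nat (n choose k) * of_nat ((k+n) choose (k+1))"
    unfolding sum_distrib_left[symmetric] of_nat_sum[symmetric] vand1 ..
  also have "\<dots> = of_nat ((n+k) choose (2*k)) * catalan k"
  proof -
    have e1: "Suc k * ((n+k) choose Suc k) = (n+k) * ((n+k-1) choose k)"
      using Suc_times_binomial[of k "n+k-1"] assms by simp
    have e2: "n * ((n+k) choose k) = (n+k) * ((n+k-1) choose k)"
      using binomial_absorb_comp[of "n+k" k] by simp
    have e3: "((n+k) choose (2*k)) * ((2*k) choose k) = ((n+k) choose k) * (n choose k)"
      using choose_mult[of k "2*k" "n+k"] assms by (simp add: mult_2)
    have "(of_nat (Suc k) * of_nat ((n+k) choose Suc k) :: complex) = of_nat n * of_nat ((n+k) choose k)"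
      using e1 e2 by (metis of_nat_mult)
    moreover have "(of_nat ((n+k) choose (2*k)) * of_nat ((2*k) choose k) :: complex) = of_nat ((n+k) choose k) * of_nat (n choose k)"
      using e3 by (metis of_nat_mult)
    ultimately show ?thesis using assms
      by (simp add: catalan_def field_simps del: of_nat_Suc binomial_Suc_Suc)
  qed
  finally show ?thesis .
qed


lemma claimT:
  fixes p x T :: complex
  shows "(\<Sum>k\<le>r. of_nat (r choose k) * of_nat (k choose (2*i)) * p^(k-2*i) * x^k * T^(r-k))
         = of_nat (r choose (2*i)) * x^(2*i) * (p*x + T)^(r-2*i)"
proof (cases "2*i \<le> r")
  case False
  then have z1: "r choose (2*i) = 0" and z2: "\<And>k. k \<le> r \<Longrightarrow> k choose (2*i) = 0" by (auto simp: binomial_eq_0)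
  have "(\<Sum>k\<le>r. of_nat (r choose k) * of_nat (k choose (2*i)) * p^(k-2*i) * x^k * T^(r-k)) = (0::complex)"
    by (rule sum.neutral) (simp add: z2)
  then show ?thesis by (simp add: z1)
next
  case True
  have "(\<Sum>k\<le>r. of_nat (r choose k) * of_nat (k choose (2*i)) * p^(k-2*i) * x^k * T^(r-k))
      = (\<Sum>k\<in>{2*i..r}. of_nat (r choose k) * of_nat (k choose (2*i)) * p^(k-2*i) * x^k * T^(r-k))"
    by (rule sum.mono_neutral_right) (auto simp: binomial_eq_0_iff)
  also have "\<dots> = (\<Sum>l\<le>r-2*i. of_nat (r choose (l+2*i)) * of_nat ((l+2*i) choose (2*i)) * p^l * x^(l+2*i) * T^(r-(l+2*i)))"
    by (subst shift_sum[OF True]) (intro sum.cong refl, auto)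
  also have "\<dots> = (\<Sum>l\<le>r-2*i. of_nat (r choose (2*i)) * x^(2*i) * (of_nat ((r-2*i) choose l) * (p*x)^l * T^(r-2*i-l)))"
  proof (intro sum.cong refl)
    fix l assume l: "l \<in> {..r-2*i}"
    have "(r choose (l+2*i)) * ((l+2*i) choose (2*i)) = (r choose (2*i)) * ((r-2*i) choose l)"
      using choose_mult[of "2*i" "l+2*i" r] l True by auto
    hence e: "(of_nat (r choose (l+2*i)) * of_nat ((l+2*i) choose (2*i)) :: complex) = of_nat (r choose (2*i)) * of_nat ((r-2*i) choose l)"
      by (metis of_nat_mult)
    have e2: "r-(l+2*i) = r-2*i-l" by simp
    show "of_nat (r choose (l+2*i)) * of_nat ((l+2*i) choose (2*i)) * p^l * x^(l+2*i) * T^(r-(l+2*i)) = of_nat (r choose (2*i)) * x^(2*i) * (of_nat ((r-2*i) choose l) * (p*x)^l * T^(r-2*i-l))"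
      unfolding e2 power_add power_mult_distrib using e by (simp add: mult_ac)
  qed
  also have "\<dots> = of_nat (r choose (2*i)) * x^(2*i) * (p*x + T)^(r-2*i)"
    by (simp add: binomial_ring sum_distrib_left)
  finally show ?thesis .
qed


lemma valley_eq:
  "valley_catalan a b (k+1) = a * (\<Sum>i\<le>k. catalan i * of_nat (k choose (2*i)) * (b*a)^i * (b+a)^(k-2*i))"
proof -
  have "valley_catalan a b (k+1) = (\<Sum>j\<le>k. 1 / of_nat (k+1) * of_nat ((k+1) choose j) * of_nat ((k+1) choose (j+1)) * a^(k+1-j) * b^j)"
    by (simp only: valley_catalan_def add_diff_cancel_right' atLeast0AtMost)
  also have "\<dots> = (\<Sum>j\<le>k. a * (1 / of_nat (k+1) * of_nat ((k+1) choose j) * of_nat ((k+1) choose (j+1)) * b^j * a^(k-j)))"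
  proof (intro sum.cong refl)
    fix j assume "j \<in> {..k}"
    hence e: "a ^ (k+1 - j) = a * a^(k-j)" by (simp add: Suc_diff_le)
    show "1 / of_nat (k+1) * of_nat ((k+1) choose j) * of_nat ((k+1) choose (j+1)) * a^(k+1-j) * b^j = a * (1 / of_nat (k+1) * of_nat ((k+1) choose j) * of_nat ((k+1) choose (j+1)) * b^j * a^(k-j))"
      unfolding e by (simp only: mult_ac)
  qed
  also have "\<dots> = a * (\<Sum>j\<le>k. 1 / of_nat (k+1) * of_nat ((k+1) choose j) * of_nat ((k+1) choose (j+1)) * b^j * a^(k-j))"
    by (simp only: sum_distrib_left)
  also have "\<dots> = a * (\<Sum>i\<le>k. catalan i * of_nat (k choose (2*i)) * (b*a)^i * (b+a)^(k-2*i))"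
    by (simp only: lemG)
  finally show ?thesis .
qed


lemma part2:
  fixes n :: nat and a b x :: complex
  assumes "n \<ge> 1" and "b \<noteq> 0"
  shows "(\<Sum>k = 0..n - 1. (1 / of_nat n) * of_nat (n choose k) * of_nat (n choose (k + 1))
            * x ^ (2 * k) * a ^ (n - k) * b ^ (n - 1 - k))
         = (1 / b) * (\<Sum>k = 0..n. of_nat ((n + k) choose (2 * k)) * catalan k
            * x ^ (2 * k) * (a * b - x ^ 2) ^ (n - k))"
proof -
  obtain r where n: "n = Suc r" using assms(1) by (cases n) auto
  define M where "M = (\<Sum>k = 0..n - 1. (1 / of_nat n) * of_nat (n choose k) * of_nat (n choose (k + 1))
            * x ^ (2 * k) * a ^ (n - k) * b ^ (n - 1 - k))"
  have "b * M = (\<Sum>k\<le>r. (1 / of_nat n) * of_nat (n choose k) * of_nat (n choose (k + 1))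
            * (x^2) ^ k * (a*b) ^ (n - k))"
    unfolding M_def sum_distrib_left
  proof (simp only: n diff_Suc_1 atLeast0AtMost, intro sum.cong refl)
    fix k assume k: "k \<in> {..r}"
    have e1: "Suc r - k = Suc (r - k)" using k by (simp add: Suc_diff_le)
    show "b * (1 / of_nat (Suc r) * of_nat (Suc r choose k) * of_nat (Suc r choose (k + 1)) * x ^ (2 * k) * a ^ (Suc r - k) * b ^ (r - k)) =
          1 / of_nat (Suc r) * of_nat (Suc r choose k) * of_nat (Suc r choose (k + 1)) * (x^2) ^ k * (a*b) ^ (Suc r - k)"
      unfolding e1 power_mult[symmetric] by (simp add: power_mult_distrib mult_ac)
  qed
  also have "\<dots> = (\<Sum>k\<le>n. (1 / of_nat n) * of_nat (n choose k) * of_nat (n choose (k + 1))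
            * (x^2) ^ k * (a*b) ^ (n - k))"
    by (simp add: n del: binomial_Suc_Suc)
  also have "\<dots> = (\<Sum>k\<le>n. (1 / of_nat n) * of_nat (n choose k) * of_nat (n choose (k + 1))
            * (x^2) ^ k * (x^2 + (a*b - x^2)) ^ (n - k))"
    by simp
  also have "\<dots> = (\<Sum>k\<le>n. (\<Sum>j\<le>k. (1 / of_nat n) * of_nat (n choose j) * of_nat (n choose (j + 1)) * of_nat ((n-j) choose (k-j))) * (x^2)^k * (a*b - x^2)^(n-k))"
    by (rule lemA)
  also have "\<dots> = (\<Sum>k\<le>n. of_nat ((n + k) choose (2 * k)) * catalan k * x ^ (2 * k) * (a * b - x ^ 2) ^ (n - k))"
  proof (intro sum.cong refl)
    fix k assume k: "k \<in> {..n}"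
    have c: "(\<Sum>j\<le>k. (1 / of_nat n) * of_nat (n choose j) * of_nat (n choose (j + 1)) * of_nat ((n-j) choose (k-j))) = of_nat ((n + k) choose (2 * k)) * catalan k"
      using coefE2[of k n] k assms(1) by simp
    show "(\<Sum>j\<le>k. (1 / of_nat n) * of_nat (n choose j) * of_nat (n choose (j + 1)) * of_nat ((n-j) choose (k-j))) * (x^2)^k * (a*b - x^2)^(n-k) = of_nat ((n + k) choose (2 * k)) * catalan k * x ^ (2 * k) * (a * b - x ^ 2) ^ (n - k)"
      by (simp only: c power_mult)
  qed
  finally have "b * M = (\<Sum>k = 0..n. of_nat ((n + k) choose (2 * k)) * catalan k * x ^ (2 * k) * (a * b - x ^ 2) ^ (n - k))"
    by (simp add: atLeast0AtMost)
  thus ?thesis unfolding M_def[symmetric] using assms(2) by (simp add: field_simps)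
qed


lemma part1:
  fixes n :: nat and a b x :: complex
  assumes "n \<ge> 1"
  shows "(\<Sum>k = 0..n - 1. of_nat ((n - 1) choose k) * valley_catalan a b (k + 1)
            * x ^ k * (x - a) ^ (n - 1 - k) * (x - b) ^ (n - 1 - k))
         = (\<Sum>k = 0..n - 1. (1 / of_nat n) * of_nat (n choose k) * of_nat (n choose (k + 1))
            * x ^ (2 * k) * a ^ (n - k) * b ^ (n - 1 - k))"
proof -
  obtain r where n: "n = Suc r" using assms(1) by (cases n) auto
  define T where "T = (x - a) * (x - b)"
  define p where "p = a + b"
  have "(\<Sum>k = 0..n - 1. of_nat ((n - 1) choose k) * valley_catalan a b (k + 1)
            * x ^ k * (x - a) ^ (n - 1 - k) * (x - b) ^ (n - 1 - k))
      = (\<Sum>k\<le>r. \<Sum>i\<le>r. a * catalan i * (a*b)^i * (of_nat (r choose k) * of_nat (k choose (2*i)) * p^(k-2*i) * x^k * T^(r-k)))"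
  proof (simp only: n diff_Suc_1 atLeast0AtMost, intro sum.cong refl)
    fix k assume k: "k \<in> {..r}"
    have "valley_catalan a b (k+1) = a * (\<Sum>i\<le>k. catalan i * of_nat (k choose (2*i)) * (b*a)^i * (b+a)^(k-2*i))"
      by (rule valley_eq)
    also have "\<dots> = a * (\<Sum>i\<le>r. catalan i * of_nat (k choose (2*i)) * (a*b)^i * p^(k-2*i))"
    proof -
      have "(\<Sum>i\<le>k. catalan i * of_nat (k choose (2*i)) * (b*a)^i * (b+a)^(k-2*i)) = (\<Sum>i\<le>r. catalan i * of_nat (k choose (2*i)) * (b*a)^i * (b+a)^(k-2*i))"
        using k by (intro sum.mono_neutral_left) (auto simp: binomial_eq_0)
      thus ?thesis by (simp add: p_def mult.commute add.commute)
    qed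
    finally have v: "valley_catalan a b (k+1) = a * (\<Sum>i\<le>r. catalan i * of_nat (k choose (2*i)) * (a*b)^i * p^(k-2*i))" .
    have t: "(x - a) ^ (r - k) * (x - b) ^ (r - k) = T^(r-k)" by (simp add: T_def power_mult_distrib)
    show "of_nat (r choose k) * valley_catalan a b (k + 1) * x ^ k * (x - a) ^ (r - k) * (x - b) ^ (r - k) =
          (\<Sum>i\<le>r. a * catalan i * (a*b)^i * (of_nat (r choose k) * of_nat (k choose (2*i)) * p^(k-2*i) * x^k * T^(r-k)))"
      unfolding v mult.assoc[of _ "(x - a) ^ (r - k)"] t[symmetric]
      by (simp add: sum_distrib_left sum_distrib_right mult_ac)
  qed
  also have "\<dots> = (\<Sum>i\<le>r. \<Sum>k\<le>r. a * catalan i * (a*b)^i * (of_nat (r choose k) * of_nat (k choose (2*i)) * p^(k-2*i) * x^k * T^(r-k)))"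
    by (rule sum.swap)
  also have "\<dots> = (\<Sum>i\<le>r. a * catalan i * (a*b)^i * (of_nat (r choose (2*i)) * x^(2*i) * (p*x + T)^(r-2*i)))"
    by (simp only: sum_distrib_left[symmetric] claimT)
  also have "\<dots> = a * (\<Sum>i\<le>r. catalan i * of_nat (r choose (2*i)) * (x^2 * (a*b))^i * (x^2 + a*b)^(r-2*i))"
  proof -
    have "p*x + T = x^2 + a*b" by (simp add: p_def T_def algebra_simps power2_eq_square)
    moreover have xx: "\<And>i::nat. (x^i)^2 = (x^2)^i" by (metis power_mult mult.commute)
    ultimately show ?thesis by (simp add: sum_distrib_left power_mult power_mult_distrib mult_ac xx)
  qed
  also have "\<dots> = a * (\<Sum>j\<le>r. 1 / of_nat (r+1) * of_nat ((r+1) choose j) * of_nat ((r+1) choose (j+1)) * (x^2)^j * (a*b)^(r-j))"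
    by (simp only: lemG)
  also have "\<dots> = (\<Sum>k = 0..n - 1. (1 / of_nat n) * of_nat (n choose k) * of_nat (n choose (k + 1))
            * x ^ (2 * k) * a ^ (n - k) * b ^ (n - 1 - k))"
    unfolding sum_distrib_left
  proof (simp only: n diff_Suc_1 atLeast0AtMost Suc_eq_plus1[symmetric], intro sum.cong refl)
    fix k assume k: "k \<in> {..r}"
    have e1: "Suc r - k = Suc (r - k)" using k by (simp add: Suc_diff_le)
    show "a * (1 / of_nat (Suc r) * of_nat (Suc r choose k) * of_nat (Suc r choose Suc k) * (x^2)^k * (a*b)^(r-k)) =
          1 / of_nat (Suc r) * of_nat (Suc r choose k) * of_nat (Suc r choose Suc k) * x ^ (2 * k) * a ^ (Suc r - k) * b ^ (r - k)"
      unfolding e1 power_mult[symmetric] by (simp add: power_mult_distrib mult_ac)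
  qed
  finally show ?thesis .
qed

theorem proposition3p1:
  fixes n :: nat and a b x :: complex
  assumes "n \<ge> 1" and "b \<noteq> 0"
  shows "(\<Sum>k = 0..n - 1. of_nat ((n - 1) choose k) * valley_catalan a b (k + 1)
            * x ^ k * (x - a) ^ (n - 1 - k) * (x - b) ^ (n - 1 - k))
         = (\<Sum>k = 0..n - 1. (1 / of_nat n) * of_nat (n choose k) * of_nat (n choose (k + 1))
            * x ^ (2 * k) * a ^ (n - k) * b ^ (n - 1 - k))
       \<and> (\<Sum>k = 0..n - 1. (1 / of_nat n) * of_nat (n choose k) * of_nat (n choose (k + 1))
            * x ^ (2 * k) * a ^ (n - k) * b ^ (n - 1 - k))
         = (1 / b) * (\<Sum>k = 0..n. of_nat ((n + k) choose (2 * k)) * catalan k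
            * x ^ (2 * k) * (a * b - x ^ 2) ^ (n - k))"
  using part1[OF assms(1)] part2[OF assms] by blast

end
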